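(* Let $A=\{(x_k,y_k):k\in[\ell]\}\subset\mathbb N^d$ be finite, $d=m+n$. Then for all $\bar k\in[\ell]$: (a) $\mathbb D_{\mathrm{in}}(x_{\bar k},y_{\bar k},T_{\mathbb Q_\infty,V}(A))=\mathbb D_{\mathrm{in}}(x_{\bar k},y_{\bar k},Z_{\mathbb Q_\infty,V}(A))$; (b) $\mathbb D_{\mathrm{in}}(x_{\bar k},y_{\bar k},T_{\mathbb Q_\infty,C}(A))=\mathbb D_{\mathrm{in}}(x_{\bar k},y_{\bar k},Z_{\mathbb Q_\infty,C}(A))$; (c) $\mathbb D_{\mathrm{out}}(x_{\bar k},y_{\bar k},T_{\mathbb Q_\infty,V}(A))=\mathbb D_{\mathrm{out}}(x_{\bar k},y_{\bar k},Z_{\mathbb Q_\infty,V}(A))$; (d) $\mathbb D_{\mathrm{out}}(x_{\bar k},y_{\bar k},T_{\mathbb Q_\infty,C}(A))=\mathbb D_{\mathrm{out}}(x_{\bar k},y_{\bar k},Z_{\mathbb Q_\infty,C}(A))$.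
   Context: $\mathbb N$ is the set of non-negative integers; $[\ell]=\{1,\dots,\ell\}$; $1\!\!1$ denotes a vector of ones; $\vee$ is componentwise max. Max-Plus technologies: $T_{\mathbb Q_\infty,V}(A)=\{(x,y)\in\mathbb{R}_+^d: x\ge\bigvee_k(t_k1\!\!1_m+x_k),\ y\le\bigvee_k(t_k1\!\!1_n+y_k),\ \max_k t_k=0,\ t\in(\mathbb{R}\cup\{-\infty\})^\ell\}$, and $T_{\mathbb Q_\infty,C}(A)$ is the same without the constraint $\max_k t_k=0$. Discrete versions: $Z_{\mathbb Q_\infty,V}(A)=T_{\mathbb Q_\infty,V}(A)\cap\mathbb N^d$, $Z_{\mathbb Q_\infty,C}(A)=T_{\mathbb Q_\infty,C}(A)\cap\mathbb N^d$. Translation distance functions: $\mathbb D_{\mathrm{in}}(x,y,T)=\sup\{\delta\in\mathbb{R}:(x-\delta1\!\!1_m,y)\in T\}$, $\mathbb D_{\mathrm{out}}(x,y,T)=\sup\{\delta\in\mathbb{R}:(x,y+\delta1\!\!1_n)\in T\}$. *)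

theory Defs
  imports "HOL-Analysis.Analysis" "HOL-Library.Extended_Real"
begin

text \<open>Weights t k range over R \<union> {-\<infinity>},
  modelled as ereal values different from \<infinity>.\<close>

definition maxplus_T_C :: "nat \<Rightarrow> (nat \<Rightarrow> real^'m) \<Rightarrow> (nat \<Rightarrow> real^'n) \<Rightarrow> ((real^'m) \<times> (real^'n)) set" where
  "maxplus_T_C l X Y = {(x, y). (\<forall>i. 0 \<le> x $ i) \<and> (\<forall>j. 0 \<le> y $ j) \<and>
     (\<exists>t :: nat \<Rightarrow> ereal. (\<forall>k\<in>{1..l}. t k \<noteq> \<infinity>) \<and>
        (\<forall>i. (SUP k\<in>{1..l}. t k + ereal (X k $ i)) \<le> ereal (x $ i)) \<and>
        (\<forall>j. ereal (y $ j) \<le> (SUP k\<in>{1..l}. t k + ereal (Y k $ j))))}"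

definition maxplus_T_V :: "nat \<Rightarrow> (nat \<Rightarrow> real^'m) \<Rightarrow> (nat \<Rightarrow> real^'n) \<Rightarrow> ((real^'m) \<times> (real^'n)) set" where
  "maxplus_T_V l X Y = {(x, y). (\<forall>i. 0 \<le> x $ i) \<and> (\<forall>j. 0 \<le> y $ j) \<and>
     (\<exists>t :: nat \<Rightarrow> ereal. (\<forall>k\<in>{1..l}. t k \<noteq> \<infinity>) \<and>
        (SUP k\<in>{1..l}. t k) = 0 \<and>
        (\<forall>i. (SUP k\<in>{1..l}. t k + ereal (X k $ i)) \<le> ereal (x $ i)) \<and>
        (\<forall>j. ereal (y $ j) \<le> (SUP k\<in>{1..l}. t k + ereal (Y k $ j))))}"

definition nat_vec :: "real^'a \<Rightarrow> bool" where
  "nat_vec v \<longleftrightarrow> (\<forall>i. v $ i \<in> \<nat>)"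

definition nat_points :: "((real^'m) \<times> (real^'n)) set" where
  "nat_points = {(x, y). nat_vec x \<and> nat_vec y}"

definition maxplus_Z_C :: "nat \<Rightarrow> (nat \<Rightarrow> real^'m) \<Rightarrow> (nat \<Rightarrow> real^'n) \<Rightarrow> ((real^'m) \<times> (real^'n)) set" where
  "maxplus_Z_C l X Y = maxplus_T_C l X Y \<inter> nat_points"

definition maxplus_Z_V :: "nat \<Rightarrow> (nat \<Rightarrow> real^'m) \<Rightarrow> (nat \<Rightarrow> real^'n) \<Rightarrow> ((real^'m) \<times> (real^'n)) set" where
  "maxplus_Z_V l X Y = maxplus_T_V l X Y \<inter> nat_points"

definition D_in :: "real^'m \<Rightarrow> real^'n \<Rightarrow> ((real^'m) \<times> (real^'n)) set \<Rightarrow> ereal" where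
  "D_in x y T = Sup (ereal ` {\<delta>. (x - (\<chi> i. \<delta>), y) \<in> T})"

definition D_out :: "real^'m \<Rightarrow> real^'n \<Rightarrow> ((real^'m) \<times> (real^'n)) set \<Rightarrow> ereal" where
  "D_out x y T = Sup (ereal ` {\<delta>. (x, y + (\<chi> j. \<delta>)) \<in> T})"

end

theory Submission
  imports Defs
begin

lemma ereal_le_SUP_fin:
  assumes "finite K"
  shows "(ereal a \<le> (SUP k\<in>K. f k)) \<longleftrightarrow> (\<exists>k\<in>K. ereal a \<le> f k)"
proof (cases "K = {}")
  case True then show ?thesis by (simp add: bot_ereal_def)
next
  case False
  then have "(SUP k\<in>K. f k) = Max (f ` K)" using assms by (simp add: cSup_eq_Max)
  then show ?thesis using assms False by (simp add: Max_ge_iff)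
qed

lemma SUP_eq0_fin:
  assumes "finite K"
  shows "((SUP k\<in>K. t k) = (0::ereal)) \<longleftrightarrow> ((\<forall>k\<in>K. t k \<le> 0) \<and> (\<exists>k\<in>K. t k = 0))"
proof (cases "K = {}")
  case True then show ?thesis by (simp add: bot_ereal_def)
next
  case False
  then have "(SUP k\<in>K. t k) = Max (t ` K)" using assms by (simp add: cSup_eq_Max)
  moreover have "Max (t ` K) \<in> t ` K" using assms False by simp
  ultimately show ?thesis using assms False
    by (metis (no_types, lifting) Max_ge Max_le_iff dual_order.antisym finite_imageI image_iff image_is_empty)
qed

lemma int_ceil1: "(u::real) \<in> \<int> \<Longrightarrow> p + u \<le> q \<Longrightarrow> u + of_int \<lceil>p\<rceil> \<le> of_int \<lceil>q\<rceil>"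
proof -
  assume u: "u \<in> \<int>" and h: "p + u \<le> q"
  then obtain z where z: "u = of_int z" by (auto elim: Ints_cases)
  have "\<lceil>p + u\<rceil> \<le> \<lceil>q\<rceil>" using h by (rule ceiling_mono)
  moreover have "\<lceil>p + u\<rceil> = \<lceil>p\<rceil> + z" using z by simp
  ultimately show ?thesis using z by simp
qed

lemma int_ceil2: "(u::real) \<in> \<int> \<Longrightarrow> q \<le> u \<Longrightarrow> of_int \<lceil>q\<rceil> \<le> u"
  by (metis Ints_cases ceiling_le of_int_le_iff)

lemma nat_int: "(v::real) \<in> \<nat> \<Longrightarrow> v \<in> \<int>"
  using Nats_subset_Ints by blast

lemma int_nat: "(v::real) \<in> \<int> \<Longrightarrow> 0 \<le> v \<Longrightarrow> v \<in> \<nat>"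
  by (simp add: Nats_altdef2)

definition tceil :: "real \<Rightarrow> ereal \<Rightarrow> ereal" where
  "tceil a r = (if r = -\<infinity> then -\<infinity> else ereal (of_int \<lceil>real_of_ereal r + a\<rceil> - of_int \<lceil>a\<rceil>))"

lemma tceil_fin: "r \<noteq> \<infinity> \<Longrightarrow> tceil a r \<noteq> \<infinity>"
  by (simp add: tceil_def)

lemma tceil_upper:
  assumes "r \<noteq> \<infinity>" "r + ereal X \<le> ereal (x - a)" "x - X \<in> \<int>"
  shows "tceil a r + ereal X \<le> ereal (x - of_int \<lceil>a\<rceil>)"
proof (cases "r = -\<infinity>")
  case True then show ?thesis by (simp add: tceil_def)
next
  case False
  then obtain s where s: "r = ereal s" using assms(1) by (cases r) auto
  have "s + a \<le> x - X" using assms(2) s by simp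
  then have "of_int \<lceil>s + a\<rceil> \<le> x - X" using int_ceil2 assms(3) by blast
  then show ?thesis using s by (simp add: tceil_def)
qed

lemma tceil_lower:
  assumes "r \<noteq> \<infinity>" "ereal (y + b) \<le> r + ereal Y" "y - Y \<in> \<int>" "a = 0 \<or> b = 0"
  shows "ereal (y + of_int \<lceil>b\<rceil>) \<le> tceil a r + ereal Y"
proof (cases "r = -\<infinity>")
  case True then show ?thesis using assms(2) by simp
next
  case False
  then obtain s where s: "r = ereal s" using assms(1) by (cases r) auto
  have h: "y + b \<le> s + Y" using assms(2) s by simp
  show ?thesis
  proof (cases "a = 0")
    case True
    have "b + (y - Y) \<le> s" using h by simp
    then have "(y - Y) + of_int \<lceil>b\<rceil> \<le> of_int \<lceil>s\<rceil>" using int_ceil1 assms(3) by blast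
    then show ?thesis using s True False by (simp add: tceil_def)
  next
    case False
    then have b0: "b = 0" using assms(4) by simp
    have "a + (y - Y) \<le> s + a" using h b0 by simp
    then have "(y - Y) + of_int \<lceil>a\<rceil> \<le> of_int \<lceil>s + a\<rceil>" using int_ceil1 assms(3) by blast
    then show ?thesis using s b0 \<open>r \<noteq> -\<infinity>\<close> by (simp add: tceil_def)
  qed
qed

lemma tceil_le0: "r \<le> 0 \<Longrightarrow> tceil a r \<le> 0"
proof (cases "r = -\<infinity>")
  case True then show ?thesis by (simp add: tceil_def)
next
  case False
  assume "r \<le> 0"
  then obtain s where s: "r = ereal s" "s \<le> 0" using False by (cases r) auto
  then have "\<lceil>s + a\<rceil> \<le> \<lceil>a\<rceil>" by (intro ceiling_mono) simp
  then show ?thesis using s by (simp add: tceil_def)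
qed

lemma tceil_0: "tceil a 0 = 0"
  by (simp add: tceil_def zero_ereal_def)


lemma key_common:
  fixes l :: nat and X :: "nat \<Rightarrow> real^'m" and Y :: "nat \<Rightarrow> real^'n"
  assumes nX: "\<forall>k\<in>{1..l}. nat_vec (X k) \<and> nat_vec (Y k)"
    and nx: "nat_vec (x::real^'m)" and ny: "nat_vec (y::real^'n)" and ab: "a = 0 \<or> b = 0"
    and nn1: "\<forall>i. 0 \<le> (x - (\<chi> i. a)) $ i" and nn2: "\<forall>j. 0 \<le> (y + (\<chi> j. b)) $ j"
    and fin: "\<forall>k\<in>{1..l}. t k \<noteq> \<infinity>"
    and up: "\<forall>i. (SUP k\<in>{1..l}. t k + ereal (X k $ i)) \<le> ereal ((x - (\<chi> i. a)) $ i)"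
    and low: "\<forall>j. ereal ((y + (\<chi> j. b)) $ j) \<le> (SUP k\<in>{1..l}. t k + ereal (Y k $ j))"
  shows "(\<forall>i. 0 \<le> (x - (\<chi> i. of_int \<lceil>a\<rceil>)) $ i) \<and> (\<forall>j. 0 \<le> (y + (\<chi> j. of_int \<lceil>b\<rceil>)) $ j)
    \<and> (\<forall>k\<in>{1..l}. tceil a (t k) \<noteq> \<infinity>)
    \<and> (\<forall>i. (SUP k\<in>{1..l}. tceil a (t k) + ereal (X k $ i)) \<le> ereal ((x - (\<chi> i. of_int \<lceil>a\<rceil>)) $ i))
    \<and> (\<forall>j. ereal ((y + (\<chi> j. of_int \<lceil>b\<rceil>)) $ j) \<le> (SUP k\<in>{1..l}. tceil a (t k) + ereal (Y k $ j)))
    \<and> (x - (\<chi> i. of_int \<lceil>a\<rceil>), y + (\<chi> j. of_int \<lceil>b\<rceil>)) \<in> nat_points"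
proof -
  have xi: "x $ i \<in> \<int>" for i using nx nat_int unfolding nat_vec_def by blast
  have yj: "y $ j \<in> \<int>" for j using ny nat_int unfolding nat_vec_def by blast
  have Xi: "X k $ i \<in> \<int>" if "k \<in> {1..l}" for k i using nX that nat_int unfolding nat_vec_def by blast
  have Yj: "Y k $ j \<in> \<int>" if "k \<in> {1..l}" for k j using nX that nat_int unfolding nat_vec_def by blast
  have A: "\<forall>i. 0 \<le> (x - (\<chi> i. of_int \<lceil>a\<rceil>)) $ i"
  proof
    fix i
    have "a \<le> x $ i" using nn1 by (metis add.right_neutral diff_ge_0_iff_ge vec_lambda_beta vector_minus_component)
    then have "of_int \<lceil>a\<rceil> \<le> x $ i" using int_ceil2 xi by blast
    then show "0 \<le> (x - (\<chi> i. of_int \<lceil>a\<rceil>)) $ i" by simp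
  qed
  have B: "\<forall>j. 0 \<le> (y + (\<chi> j. of_int \<lceil>b\<rceil>)) $ j"
  proof
    fix j
    have "0 \<le> y $ j + b" using nn2 by simp
    moreover have "b \<le> of_int \<lceil>b\<rceil>" by simp
    ultimately have "0 \<le> y $ j + of_int \<lceil>b\<rceil>" by linarith
    then show "0 \<le> (y + (\<chi> j. of_int \<lceil>b\<rceil>)) $ j" by simp
  qed
  have C: "\<forall>i. (SUP k\<in>{1..l}. tceil a (t k) + ereal (X k $ i)) \<le> ereal ((x - (\<chi> i. of_int \<lceil>a\<rceil>)) $ i)"
  proof
    fix i
    show "(SUP k\<in>{1..l}. tceil a (t k) + ereal (X k $ i)) \<le> ereal ((x - (\<chi> i. of_int \<lceil>a\<rceil>)) $ i)"
    proof (rule SUP_least)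
      fix k assume k: "k \<in> {1..l}"
      have "t k + ereal (X k $ i) \<le> ereal (x $ i - a)" using up k
        by (metis (no_types, lifting) SUP_le_iff vec_lambda_beta vector_minus_component)
      moreover have "x $ i - X k $ i \<in> \<int>" using xi Xi k by simp
      ultimately have "tceil a (t k) + ereal (X k $ i) \<le> ereal (x $ i - of_int \<lceil>a\<rceil>)"
        using tceil_upper fin k by blast
      then show "tceil a (t k) + ereal (X k $ i) \<le> ereal ((x - (\<chi> i. of_int \<lceil>a\<rceil>)) $ i)" by simp
    qed
  qed
  have D: "\<forall>j. ereal ((y + (\<chi> j. of_int \<lceil>b\<rceil>)) $ j) \<le> (SUP k\<in>{1..l}. tceil a (t k) + ereal (Y k $ j))"
  proof
    fix j
    have "ereal (y $ j + b) \<le> (SUP k\<in>{1..l}. t k + ereal (Y k $ j))" using low by simp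
    then obtain k where k: "k \<in> {1..l}" and kk: "ereal (y $ j + b) \<le> t k + ereal (Y k $ j)"
      using ereal_le_SUP_fin[OF finite_atLeastAtMost, where f="\<lambda>k. t k + ereal (Y k $ j)"] by auto
    have "y $ j - Y k $ j \<in> \<int>" using yj Yj k by simp
    then have "ereal (y $ j + of_int \<lceil>b\<rceil>) \<le> tceil a (t k) + ereal (Y k $ j)"
      using tceil_lower fin k kk ab by blast
    then have "\<exists>k\<in>{1..l}. ereal ((y + (\<chi> j. of_int \<lceil>b\<rceil>)) $ j) \<le> tceil a (t k) + ereal (Y k $ j)"
      using k by auto
    then show "ereal ((y + (\<chi> j. of_int \<lceil>b\<rceil>)) $ j) \<le> (SUP k\<in>{1..l}. tceil a (t k) + ereal (Y k $ j))"
      using ereal_le_SUP_fin[OF finite_atLeastAtMost, where f="\<lambda>k. tceil a (t k) + ereal (Y k $ j)"] by simp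
  qed
  have E: "(x - (\<chi> i. of_int \<lceil>a\<rceil>), y + (\<chi> j. of_int \<lceil>b\<rceil>)) \<in> nat_points"
    unfolding nat_points_def nat_vec_def
  proof (simp, intro conjI allI)
    fix i
    have "x $ i - of_int \<lceil>a\<rceil> \<in> \<int>" using xi by simp
    then show "x $ i - of_int \<lceil>a\<rceil> \<in> \<nat>" using A int_nat by simp
  next
    fix j
    have "y $ j + of_int \<lceil>b\<rceil> \<in> \<int>" using yj by simp
    then show "y $ j + of_int \<lceil>b\<rceil> \<in> \<nat>" using B int_nat by simp
  qed
  show ?thesis using A B C D E fin tceil_fin by blast
qed

lemma key_C:
  fixes l :: nat and X :: "nat \<Rightarrow> real^'m" and Y :: "nat \<Rightarrow> real^'n"
  assumes nX: "\<forall>k\<in>{1..l}. nat_vec (X k) \<and> nat_vec (Y k)"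
    and nx: "nat_vec x" and ny: "nat_vec y" and ab: "a = 0 \<or> b = 0"
    and mem: "(x - (\<chi> i. a), y + (\<chi> j. b)) \<in> maxplus_T_C l X Y"
  shows "(x - (\<chi> i. of_int \<lceil>a\<rceil>), y + (\<chi> j. of_int \<lceil>b\<rceil>)) \<in> maxplus_Z_C l X Y"
proof -
  from mem obtain t where
    nn1: "\<forall>i. 0 \<le> (x - (\<chi> i. a)) $ i" and nn2: "\<forall>j. 0 \<le> (y + (\<chi> j. b)) $ j"
    and fin: "\<forall>k\<in>{1..l}. t k \<noteq> \<infinity>"
    and up: "\<forall>i. (SUP k\<in>{1..l}. t k + ereal (X k $ i)) \<le> ereal ((x - (\<chi> i. a)) $ i)"
    and low: "\<forall>j. ereal ((y + (\<chi> j. b)) $ j) \<le> (SUP k\<in>{1..l}. t k + ereal (Y k $ j))"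
    unfolding maxplus_T_C_def by blast
  note K = key_common[OF nX nx ny ab nn1 nn2 fin up low]
  show ?thesis unfolding maxplus_Z_C_def maxplus_T_C_def
    using K apply (intro IntI)
     apply (simp only: mem_Collect_eq prod.case)
     apply (intro conjI exI[of _ "\<lambda>k. tceil a (t k)"])
    by blast+
qed

lemma key_V:
  fixes l :: nat and X :: "nat \<Rightarrow> real^'m" and Y :: "nat \<Rightarrow> real^'n"
  assumes nX: "\<forall>k\<in>{1..l}. nat_vec (X k) \<and> nat_vec (Y k)"
    and nx: "nat_vec x" and ny: "nat_vec y" and ab: "a = 0 \<or> b = 0"
    and mem: "(x - (\<chi> i. a), y + (\<chi> j. b)) \<in> maxplus_T_V l X Y"
  shows "(x - (\<chi> i. of_int \<lceil>a\<rceil>), y + (\<chi> j. of_int \<lceil>b\<rceil>)) \<in> maxplus_Z_V l X Y"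
proof -
  from mem obtain t where
    nn1: "\<forall>i. 0 \<le> (x - (\<chi> i. a)) $ i" and nn2: "\<forall>j. 0 \<le> (y + (\<chi> j. b)) $ j"
    and fin: "\<forall>k\<in>{1..l}. t k \<noteq> \<infinity>"
    and s0: "(SUP k\<in>{1..l}. t k) = 0"
    and up: "\<forall>i. (SUP k\<in>{1..l}. t k + ereal (X k $ i)) \<le> ereal ((x - (\<chi> i. a)) $ i)"
    and low: "\<forall>j. ereal ((y + (\<chi> j. b)) $ j) \<le> (SUP k\<in>{1..l}. t k + ereal (Y k $ j))"
    unfolding maxplus_T_V_def by blast
  note K = key_common[OF nX nx ny ab nn1 nn2 fin up low]
  have s: "(\<forall>k\<in>{1..l}. t k \<le> 0) \<and> (\<exists>k\<in>{1..l}. t k = 0)"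
    using s0 SUP_eq0_fin[of "{1..l}" t] by simp
  have "(\<forall>k\<in>{1..l}. tceil a (t k) \<le> 0) \<and> (\<exists>k\<in>{1..l}. tceil a (t k) = 0)"
    using s tceil_le0 tceil_0 by metis
  then have s': "(SUP k\<in>{1..l}. tceil a (t k)) = 0"
    using SUP_eq0_fin[of "{1..l}" "\<lambda>k. tceil a (t k)"] by simp
  show ?thesis unfolding maxplus_Z_V_def maxplus_T_V_def
    using K s' apply (intro IntI)
     apply (simp only: mem_Collect_eq prod.case)
     apply (intro conjI exI[of _ "\<lambda>k. tceil a (t k)"])
    by blast+
qed

lemma Sup_cmp:
  assumes "B \<subseteq> A" "\<forall>d\<in>A. \<exists>d'\<in>B. d \<le> d'"
  shows "Sup (ereal ` A) = Sup (ereal ` B)"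
proof (rule antisym)
  show "Sup (ereal ` A) \<le> Sup (ereal ` B)"
  proof (rule Sup_least)
    fix z assume "z \<in> ereal ` A"
    then obtain d where d: "d \<in> A" "z = ereal d" by auto
    then obtain d' where "d' \<in> B" "d \<le> d'" using assms(2) by blast
    then show "z \<le> Sup (ereal ` B)" using d by (meson Sup_upper2 ereal_less_eq(3) imageI)
  qed
  show "Sup (ereal ` B) \<le> Sup (ereal ` A)" using assms(1) by (intro Sup_subset_mono) auto
qed

lemma vec0: "((\<chi> j. (0::real))::real^'a) = 0" "((\<chi> j. (of_int \<lceil>(0::real)\<rceil>::real))::real^'a) = 0"
  by (simp_all add: vec_eq_iff)

theorem mainTheorem7:
  fixes l :: nat and X :: "nat \<Rightarrow> real^'m" and Y :: "nat \<Rightarrow> real^'n" and kb :: nat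
  assumes "\<forall>k\<in>{1..l}. nat_vec (X k) \<and> nat_vec (Y k)"
    and "kb \<in> {1..l}"
  shows "D_in (X kb) (Y kb) (maxplus_T_V l X Y) = D_in (X kb) (Y kb) (maxplus_Z_V l X Y)
       \<and> D_in (X kb) (Y kb) (maxplus_T_C l X Y) = D_in (X kb) (Y kb) (maxplus_Z_C l X Y)
       \<and> D_out (X kb) (Y kb) (maxplus_T_V l X Y) = D_out (X kb) (Y kb) (maxplus_Z_V l X Y)
       \<and> D_out (X kb) (Y kb) (maxplus_T_C l X Y) = D_out (X kb) (Y kb) (maxplus_Z_C l X Y)"
proof -
  have nx: "nat_vec (X kb)" and ny: "nat_vec (Y kb)" using assms by auto
  note nX = assms(1)
  have 1: "D_in (X kb) (Y kb) (maxplus_T_V l X Y) = D_in (X kb) (Y kb) (maxplus_Z_V l X Y)"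
    unfolding D_in_def
  proof (rule Sup_cmp)
    show "{\<delta>. (X kb - (\<chi> i. \<delta>), Y kb) \<in> maxplus_Z_V l X Y} \<subseteq> {\<delta>. (X kb - (\<chi> i. \<delta>), Y kb) \<in> maxplus_T_V l X Y}"
      unfolding maxplus_Z_V_def by auto
    show "\<forall>d\<in>{\<delta>. (X kb - (\<chi> i. \<delta>), Y kb) \<in> maxplus_T_V l X Y}. \<exists>d'\<in>{\<delta>. (X kb - (\<chi> i. \<delta>), Y kb) \<in> maxplus_Z_V l X Y}. d \<le> d'"
    proof
      fix d assume "d \<in> {\<delta>. (X kb - (\<chi> i. \<delta>), Y kb) \<in> maxplus_T_V l X Y}"
      then have "(X kb - (\<chi> i. d), Y kb + (\<chi> j. 0)) \<in> maxplus_T_V l X Y" by (simp add: vec0)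
      from key_V[OF nX nx ny _ this] have "(X kb - (\<chi> i. of_int \<lceil>d\<rceil>), Y kb) \<in> maxplus_Z_V l X Y"
        by (simp add: vec0)
      then show "\<exists>d'\<in>{\<delta>. (X kb - (\<chi> i. \<delta>), Y kb) \<in> maxplus_Z_V l X Y}. d \<le> d'"
        by (intro bexI[of _ "of_int \<lceil>d\<rceil>"]) auto
    qed
  qed
  have 2: "D_in (X kb) (Y kb) (maxplus_T_C l X Y) = D_in (X kb) (Y kb) (maxplus_Z_C l X Y)"
    unfolding D_in_def
  proof (rule Sup_cmp)
    show "{\<delta>. (X kb - (\<chi> i. \<delta>), Y kb) \<in> maxplus_Z_C l X Y} \<subseteq> {\<delta>. (X kb - (\<chi> i. \<delta>), Y kb) \<in> maxplus_T_C l X Y}"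
      unfolding maxplus_Z_C_def by auto
    show "\<forall>d\<in>{\<delta>. (X kb - (\<chi> i. \<delta>), Y kb) \<in> maxplus_T_C l X Y}. \<exists>d'\<in>{\<delta>. (X kb - (\<chi> i. \<delta>), Y kb) \<in> maxplus_Z_C l X Y}. d \<le> d'"
    proof
      fix d assume "d \<in> {\<delta>. (X kb - (\<chi> i. \<delta>), Y kb) \<in> maxplus_T_C l X Y}"
      then have "(X kb - (\<chi> i. d), Y kb + (\<chi> j. 0)) \<in> maxplus_T_C l X Y" by (simp add: vec0)
      from key_C[OF nX nx ny _ this] have "(X kb - (\<chi> i. of_int \<lceil>d\<rceil>), Y kb) \<in> maxplus_Z_C l X Y"
        by (simp add: vec0)
      then show "\<exists>d'\<in>{\<delta>. (X kb - (\<chi> i. \<delta>), Y kb) \<in> maxplus_Z_C l X Y}. d \<le> d'"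
        by (intro bexI[of _ "of_int \<lceil>d\<rceil>"]) auto
    qed
  qed
  have 3: "D_out (X kb) (Y kb) (maxplus_T_V l X Y) = D_out (X kb) (Y kb) (maxplus_Z_V l X Y)"
    unfolding D_out_def
  proof (rule Sup_cmp)
    show "{\<delta>. (X kb, Y kb + (\<chi> i. \<delta>)) \<in> maxplus_Z_V l X Y} \<subseteq> {\<delta>. (X kb, Y kb + (\<chi> i. \<delta>)) \<in> maxplus_T_V l X Y}"
      unfolding maxplus_Z_V_def by auto
    show "\<forall>d\<in>{\<delta>. (X kb, Y kb + (\<chi> i. \<delta>)) \<in> maxplus_T_V l X Y}. \<exists>d'\<in>{\<delta>. (X kb, Y kb + (\<chi> i. \<delta>)) \<in> maxplus_Z_V l X Y}. d \<le> d'"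
    proof
      fix d assume "d \<in> {\<delta>. (X kb, Y kb + (\<chi> i. \<delta>)) \<in> maxplus_T_V l X Y}"
      then have "(X kb - (\<chi> i. 0), Y kb + (\<chi> j. d)) \<in> maxplus_T_V l X Y" by (simp add: vec0)
      from key_V[OF nX nx ny _ this] have "(X kb, Y kb + (\<chi> j. of_int \<lceil>d\<rceil>)) \<in> maxplus_Z_V l X Y"
        by (simp add: vec0)
      then show "\<exists>d'\<in>{\<delta>. (X kb, Y kb + (\<chi> i. \<delta>)) \<in> maxplus_Z_V l X Y}. d \<le> d'"
        by (intro bexI[of _ "of_int \<lceil>d\<rceil>"]) auto
    qed
  qed
  have 4: "D_out (X kb) (Y kb) (maxplus_T_C l X Y) = D_out (X kb) (Y kb) (maxplus_Z_C l X Y)"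
    unfolding D_out_def
  proof (rule Sup_cmp)
    show "{\<delta>. (X kb, Y kb + (\<chi> i. \<delta>)) \<in> maxplus_Z_C l X Y} \<subseteq> {\<delta>. (X kb, Y kb + (\<chi> i. \<delta>)) \<in> maxplus_T_C l X Y}"
      unfolding maxplus_Z_C_def by auto
    show "\<forall>d\<in>{\<delta>. (X kb, Y kb + (\<chi> i. \<delta>)) \<in> maxplus_T_C l X Y}. \<exists>d'\<in>{\<delta>. (X kb, Y kb + (\<chi> i. \<delta>)) \<in> maxplus_Z_C l X Y}. d \<le> d'"
    proof
      fix d assume "d \<in> {\<delta>. (X kb, Y kb + (\<chi> i. \<delta>)) \<in> maxplus_T_C l X Y}"
      then have "(X kb - (\<chi> i. 0), Y kb + (\<chi> j. d)) \<in> maxplus_T_C l X Y" by (simp add: vec0)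
      from key_C[OF nX nx ny _ this] have "(X kb, Y kb + (\<chi> j. of_int \<lceil>d\<rceil>)) \<in> maxplus_Z_C l X Y"
        by (simp add: vec0)
      then show "\<exists>d'\<in>{\<delta>. (X kb, Y kb + (\<chi> i. \<delta>)) \<in> maxplus_Z_C l X Y}. d \<le> d'"
        by (intro bexI[of _ "of_int \<lceil>d\<rceil>"]) auto
    qed
  qed
  show ?thesis using 1 2 3 4 by blast
qed

end
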